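(* Let $n \ge 1$ and define $\phi_k = -\pi\frac{n+1}{n} + \frac{2\pi k}{n}$ for $k = 1,\dots,n$, $\Phi = (\phi_1,\dots,\phi_n)$, and for a permutation $\sigma$ of $(1,\dots,n)$ let $\Phi_\sigma = (\phi_{\sigma(1)},\dots,\phi_{\sigma(n)})$. Let $$D_n = \{\tau + \Phi_\sigma : \tau \in (-\pi,\pi),\ \sigma \in \Pi_n\} \subset \mathbb{R}^n,$$ where $\tau + \Phi_\sigma = (\tau + \phi_{\sigma(1)},\dots,\tau+\phi_{\sigma(n)})$ and $\Pi_n$ is the set of permutations of $(1,\dots,n)$. Let $\Theta = (\theta_1,\dots,\theta_n)$ with each $\theta_i \in [-\pi,\pi)$. Then a minimizer of $$\hat\Theta \mapsto \sum_{i=1}^n \tfrac12(\theta_i - \hat\theta_i)^2 \quad \text{over } \hat\Theta \in D_n$$ is given by $\hat\theta^\star_i = \tau^\star + \phi_{\sigma^{-1}(i)}$, where $\sigma$ is a permutation such that $\theta_{\sigma(1)} \le \theta_{\sigma(2)} \le \dots \le \theta_{\sigma(n)}$ and $\tau^\star = \frac{1}{n}\sum_{i=1}^n \theta_i$.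
   Context: Angles on the circle are represented by real numbers in $[-\pi,\pi)$; the configuration $\Phi$ is a set of $n$ equally spaced angles, and $D_n$ is the set of all rotated and permuted copies of it (the optimally dispersed ordered configurations of $n$ points on the circle). *)

theory Defs
  imports "HOL-Analysis.Analysis" "HOL-Combinatorics.Permutations"
begin

text \<open>Configurations in R^n are represented as functions nat => real, with the
  coordinates indexed by 1..n and the value 0 outside 1..n.\<close>

definition phi :: "nat \<Rightarrow> nat \<Rightarrow> real" where
  "phi n k = - pi * (real n + 1) / real n + 2 * pi * real k / real n"

definition vec_on :: "nat \<Rightarrow> (nat \<Rightarrow> real) \<Rightarrow> nat \<Rightarrow> real" where
  "vec_on n f = (\<lambda>i. if i \<in> {1..n} then f i else 0)"

definition Dn :: "nat \<Rightarrow> (nat \<Rightarrow> real) set" where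
  "Dn n = {vec_on n (\<lambda>i. tau + phi n (\<sigma> i)) | tau \<sigma>.
              tau \<in> {-pi<..<pi} \<and> \<sigma> permutes {1..n}}"

definition cost :: "nat \<Rightarrow> (nat \<Rightarrow> real) \<Rightarrow> (nat \<Rightarrow> real) \<Rightarrow> real" where
  "cost n \<theta> \<theta>h = (\<Sum>i=1..n. (1/2) * (\<theta> i - \<theta>h i)^2)"

end

theory Submission
  imports Defs
begin

lemma rearr:
  fixes b :: "nat \<Rightarrow> real"
  assumes "p permutes {1..n}" "\<forall>i\<in>{1..n}. \<forall>j\<in>{1..n}. i \<le> j \<longrightarrow> b i \<le> b j"
  shows "(\<Sum>j=1..n. b j * real (p j)) \<le> (\<Sum>j=1..n. b j * real j)"
  using assms
proof (induction n arbitrary: p)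
  case 0
  then show ?case by simp
next
  case (Suc n)
  define N where "N = Suc n"
  define k where "k = p N"
  define q where "q = Transposition.transpose N k \<circ> p"
  have ins: "{1..Suc n} = insert N {1..n}" unfolding N_def by auto
  have qp: "q permutes {1..n}" unfolding q_def k_def
    using permutes_insert_lemma[of p N "{1..n}"] Suc.prems(1) ins by simp
  have bm: "\<forall>i\<in>{1..n}. \<forall>j\<in>{1..n}. i \<le> j \<longrightarrow> b i \<le> b j" using Suc.prems(2) by auto
  have IH: "(\<Sum>j=1..n. b j * real (q j)) \<le> (\<Sum>j=1..n. b j * real j)"
    using Suc.IH[OF qp bm] .
  have qN: "q N = N" unfolding q_def k_def by simp
  have kin: "k \<in> {1..N}" unfolding k_def N_def using permutes_in_seg[OF Suc.prems(1), of "Suc n"]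
    by simp
  obtain m where m: "m \<in> {1..N}" "p m = N"
  proof
    have ip: "inv p permutes {1..Suc n}" using Suc.prems(1) by (rule permutes_inv)
    show "inv p N \<in> {1..N}" using permutes_in_seg[OF ip, of N] unfolding N_def by simp
    show "p (inv p N) = N" using Suc.prems(1) by (simp add: permutes_inverses)
  qed
  have pinj: "inj p" using Suc.prems(1) by (simp add: permutes_inj)
  define d where "d j = b j * real (q j) - b j * real (p j)" for j
  have d0: "d j = 0" if "j \<notin> {m, N}" for j
  proof -
    have "p j \<noteq> N" using m that pinj by (metis inj_eq insertCI)
    moreover have "p j \<noteq> k" unfolding k_def using that pinj by (metis inj_eq insertCI)
    ultimately show ?thesis unfolding d_def q_def by simp
  qed
  have "sum d {1..N} = sum d {m, N}"
    proof (rule sum.mono_neutral_right)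
    show "{m, N} \<subseteq> {1..N}" using m by (auto simp: N_def)
    show "\<forall>i\<in>{1..N} - {m, N}. d i = 0" using d0 by blast
  qed simp
  also have "sum d {m, N} \<ge> 0"
  proof (cases "m = N")
    case True
    then have "k = N" using m k_def by simp
    then show ?thesis using True by (simp add: d_def q_def)
  next
    case False
    have qm: "q m = k" unfolding q_def using m by simp
    have "sum d {m, N} = d m + d N" using False by simp
    also have "\<dots> = (b N - b m) * (real N - real k)"
      unfolding d_def using qm qN m k_def by (simp add: algebra_simps)
    also have "\<dots> \<ge> 0"
      using Suc.prems(2) m kin unfolding N_def by (intro mult_nonneg_nonneg) auto
    finally show ?thesis .
  qed
  finally have "sum d {1..N} \<ge> 0" .
  then have "(\<Sum>j=1..N. b j * real (p j)) \<le> (\<Sum>j=1..N. b j * real (q j))"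
    unfolding d_def by (simp add: sum_subtractf)
  also have "\<dots> = (\<Sum>j=1..n. b j * real (q j)) + b N * real N"
    using qN unfolding N_def by simp
  also have "\<dots> \<le> (\<Sum>j=1..n. b j * real j) + b N * real N" using IH by simp
  also have "\<dots> = (\<Sum>j=1..N. b j * real j)" unfolding N_def by simp
  finally show ?case unfolding N_def .
qed


lemma gauss_real: "(\<Sum>k=1..n. real k) = real n * (real n + 1) / 2"
  by (induction n) (auto simp: algebra_simps)

lemma aff_sum: "(\<Sum>k\<in>A. (c::real) + d * f k) = real (card A) * c + d * sum f A"
  by (simp add: sum.distrib sum_distrib_left)

lemma aff_sum2: "(\<Sum>k\<in>A. (g k::real) * (c + d * f k)) = c * sum g A + d * (\<Sum>k\<in>A. g k * f k)"
  by (simp add: sum.distrib sum_distrib_left algebra_simps)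

lemma phi_lin: "n \<ge> 1 \<Longrightarrow> phi n k = - pi * (real n + 1) / real n + (2 * pi / real n) * real k"
  unfolding phi_def by simp

lemma sum_phi: assumes "n \<ge> 1" shows "(\<Sum>k=1..n. phi n k) = 0"
proof -
  have "(\<Sum>k=1..n. phi n k) = (\<Sum>k=1..n. - pi * (real n + 1) / real n + (2 * pi / real n) * real k)"
    using assms by (simp add: phi_lin)
  also have "\<dots> = real n * (- pi * (real n + 1) / real n) + (2 * pi / real n) * (\<Sum>k=1..n. real k)"
    using aff_sum[of "- pi * (real n + 1) / real n" "2 * pi / real n" real "{1..n}"] by simp
  also have "\<dots> = 0" using assms by (simp only: gauss_real) (simp add: field_simps)
  finally show ?thesis .
qed

lemma cost_expand:
  assumes "n \<ge> 1" "\<rho> permutes {1..n}"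
  shows "cost n \<theta> (vec_on n (\<lambda>i. t + phi n (\<rho> i))) =
     (1/2) * (\<Sum>i=1..n. (\<theta> i)^2) + (1/2) * (\<Sum>k=1..n. (phi n k)^2)
     - (\<Sum>i=1..n. \<theta> i * phi n (\<rho> i)) - t * (\<Sum>i=1..n. \<theta> i) + real n * t^2 / 2"
proof -
  have s1: "(\<Sum>i=1..n. phi n (\<rho> i)) = 0"
    using sum.permute[OF assms(2), of "phi n"] sum_phi[OF assms(1)] by (simp add: comp_def)
  have s2: "(\<Sum>i=1..n. (phi n (\<rho> i))^2) = (\<Sum>k=1..n. (phi n k)^2)"
    using sum.permute[OF assms(2), of "\<lambda>k. (phi n k)^2"] by (simp add: comp_def)
  have "cost n \<theta> (vec_on n (\<lambda>i. t + phi n (\<rho> i))) =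
     (\<Sum>i=1..n. (1/2) * (\<theta> i)^2 + (1/2) * (phi n (\<rho> i))^2 - \<theta> i * phi n (\<rho> i)
        - t * \<theta> i + t * phi n (\<rho> i) + t^2/2)"
    unfolding cost_def vec_on_def
    by (rule sum.cong) (auto simp: power2_eq_square algebra_simps)
  also have "\<dots> = (1/2) * (\<Sum>i=1..n. (\<theta> i)^2) + (1/2) * (\<Sum>i=1..n. (phi n (\<rho> i))^2)
     - (\<Sum>i=1..n. \<theta> i * phi n (\<rho> i)) - t * (\<Sum>i=1..n. \<theta> i) + t * (\<Sum>i=1..n. phi n (\<rho> i)) + real n * t^2 / 2"
    by (simp add: sum.distrib sum_subtractf sum_distrib_left)
  also have "\<dots> = (1/2) * (\<Sum>i=1..n. (\<theta> i)^2) + (1/2) * (\<Sum>k=1..n. (phi n k)^2)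
     - (\<Sum>i=1..n. \<theta> i * phi n (\<rho> i)) - t * (\<Sum>i=1..n. \<theta> i) + real n * t^2 / 2"
    using s1 s2 by simp
  finally show ?thesis .
qed

lemma inner_bound:
  assumes "n \<ge> 1" "\<rho> permutes {1..n}" "\<sigma> permutes {1..n}"
    and "\<forall>i\<in>{1..n}. \<forall>j\<in>{1..n}. i \<le> j \<longrightarrow> \<theta> (\<sigma> i) \<le> \<theta> (\<sigma> j)"
  shows "(\<Sum>i=1..n. \<theta> i * phi n (\<rho> i)) \<le> (\<Sum>i=1..n. \<theta> i * phi n (inv \<sigma> i))"
proof -
  define c where "c = - pi * (real n + 1) / real n"
  define d where "d = 2 * pi / real n"
  have dpos: "d \<ge> 0" unfolding d_def by simp
  have lin: "\<And>\<pi>. (\<Sum>i=1..n. \<theta> i * phi n (\<pi> i)) = c * (\<Sum>i=1..n. \<theta> i) + d * (\<Sum>i=1..n. \<theta> i * real (\<pi> i))"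
  proof -
    fix \<pi> :: "nat \<Rightarrow> nat"
    have "(\<Sum>i=1..n. \<theta> i * phi n (\<pi> i)) = (\<Sum>i=1..n. \<theta> i * (c + d * real (\<pi> i)))"
      by (rule sum.cong) (simp_all add: phi_lin assms(1) c_def d_def)
    then show "(\<Sum>i=1..n. \<theta> i * phi n (\<pi> i)) = c * (\<Sum>i=1..n. \<theta> i) + d * (\<Sum>i=1..n. \<theta> i * real (\<pi> i))"
      by (simp only: aff_sum2)
  qed
  have e1: "(\<Sum>i=1..n. \<theta> i * real (\<rho> i)) = (\<Sum>j=1..n. \<theta> (\<sigma> j) * real ((\<rho> \<circ> \<sigma>) j))"
    using sum.permute[OF assms(3), of "\<lambda>i. \<theta> i * real (\<rho> i)"] by (simp add: comp_def)
  have e2: "(\<Sum>i=1..n. \<theta> i * real (inv \<sigma> i)) = (\<Sum>j=1..n. \<theta> (\<sigma> j) * real j)"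
    using sum.permute[OF assms(3), of "\<lambda>i. \<theta> i * real (inv \<sigma> i)"] assms(3)
    by (simp add: comp_def permutes_inverses)
  have "(\<Sum>j=1..n. \<theta> (\<sigma> j) * real ((\<rho> \<circ> \<sigma>) j)) \<le> (\<Sum>j=1..n. \<theta> (\<sigma> j) * real j)"
  proof (rule rearr[where b = "\<lambda>j. \<theta> (\<sigma> j)"])
    show "\<rho> \<circ> \<sigma> permutes {1..n}" using permutes_compose[OF assms(3) assms(2)] .
  qed (use assms(4) in auto)
  then have "(\<Sum>i=1..n. \<theta> i * real (\<rho> i)) \<le> (\<Sum>i=1..n. \<theta> i * real (inv \<sigma> i))"
    using e1 e2 by simp
  then show ?thesis unfolding lin using dpos by (simp add: mult_left_mono)
qed

theorem lemma3:
  fixes n :: nat and \<theta> :: "nat \<Rightarrow> real" and \<sigma> :: "nat \<Rightarrow> nat"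
  assumes "n \<ge> 1"
    and "\<forall>i\<in>{1..n}. \<theta> i \<in> {-pi..<pi}"
    and "\<sigma> permutes {1..n}"
    and "\<forall>i\<in>{1..n}. \<forall>j\<in>{1..n}. i \<le> j \<longrightarrow> \<theta> (\<sigma> i) \<le> \<theta> (\<sigma> j)"
  shows "(let tau = (\<Sum>i=1..n. \<theta> i) / real n;
              \<theta>s = vec_on n (\<lambda>i. tau + phi n (inv \<sigma> i))
          in (\<forall>\<theta>h\<in>Dn n. cost n \<theta> \<theta>s \<le> cost n \<theta> \<theta>h)
             \<and> (\<theta>s \<in> Dn n \<or> (\<forall>i\<in>{1..n}. \<theta> i = - pi)))"
proof -
  define S where "S = (\<Sum>i=1..n. \<theta> i)"
  define tau where "tau = S / real n"
  have npos: "real n > 0" using assms(1) by simp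
  have ip: "inv \<sigma> permutes {1..n}" using assms(3) by (rule permutes_inv)
  have A: "cost n \<theta> (vec_on n (\<lambda>i. tau + phi n (inv \<sigma> i))) \<le> cost n \<theta> \<theta>h" if thD: "\<theta>h \<in> Dn n" for \<theta>h
  proof -
    obtain t \<rho> where th: "\<theta>h = vec_on n (\<lambda>i. t + phi n (\<rho> i))" and rp: "\<rho> permutes {1..n}"
      using thD by (auto simp: Dn_def)
    have q: "- tau * S + real n * tau^2 / 2 \<le> - t * S + real n * t^2 / 2"
    proof -
      have "0 \<le> real n * (t - tau)^2 / 2" using npos by simp
      moreover have "real n * (t - tau)^2 / 2 = (- t * S + real n * t^2 / 2) - (- tau * S + real n * tau^2 / 2)"
        using npos unfolding tau_def by (simp add: field_simps power2_eq_square)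
      ultimately show ?thesis by simp
    qed
    show ?thesis
      unfolding th cost_expand[OF assms(1) rp] cost_expand[OF assms(1) ip] S_def[symmetric]
      using inner_bound[OF assms(1) rp assms(3,4)] q by (simp add: algebra_simps)
  qed
  have B: "vec_on n (\<lambda>i. tau + phi n (inv \<sigma> i)) \<in> Dn n \<or> (\<forall>i\<in>{1..n}. \<theta> i = - pi)"
  proof (cases "\<forall>i\<in>{1..n}. \<theta> i = - pi")
    case True then show ?thesis by simp
  next
    case False
    then obtain i0 where i0: "i0 \<in> {1..n}" "\<theta> i0 \<noteq> - pi" by blast
    have "(\<Sum>i=1..n. \<theta> i) < (\<Sum>i=1..n. pi)"
      by (rule sum_strict_mono) (use assms(1,2) in auto)
    then have hi: "tau < pi" using npos unfolding tau_def S_def by (simp add: field_simps)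
    have "(\<Sum>i=1..n. - pi) < (\<Sum>i=1..n. \<theta> i)"
      by (rule sum_strict_mono_ex1) (use assms(2) i0 in force)+
    then have lo: "- pi < tau" using npos unfolding tau_def S_def by (simp add: field_simps)
    have "vec_on n (\<lambda>i. tau + phi n (inv \<sigma> i)) \<in> Dn n"
      unfolding Dn_def using hi lo ip by (intro CollectI exI[of _ tau] exI[of _ "inv \<sigma>"]) auto
    then show ?thesis by simp
  qed
  show ?thesis unfolding Let_def using A B unfolding tau_def S_def by blast
qed

end
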